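(* Let $0\le a<b\le1$ and let $B|_{[a,b]}$ be the Bernoulli channel with inputs restricted to $[a,b]$. For every $\lambda_1,\lambda_2>0$ with $\lambda_1+\lambda_2<1$, \[ \frac14\le\dot{C}_{\mathrm{DI}}(B|_{[a,b]})\le\limsup_{n\to\infty}\frac{1}{n\log n}\log N_{\mathrm{DI}}(n,\lambda_1,\lambda_2)\le\frac12, \] where $N_{\mathrm{DI}}$ refers to the channel $B|_{[a,b]}$.
   Context: The Bernoulli channel maps $x\in[0,1]$ to the distribution $B_x$ on $\{0,1\}$ with $B_x(1)=x$, $B_x(0)=1-x$; $B|_{[a,b]}$ is the same map with input set $[a,b]$. For $x^n$, $B_{x^n}(y^n)=\prod_iB_{x_i}(y_i)$. An $(n,N,\lambda_1,\lambda_2)$-DI code for $B|_{[a,b]}$ is a family $\{(u_j,\mathcal{E}_j):j\in[N]\}$, $u_j\in[a,b]^n$, $\mathcal{E}_j\subset\{0,1\}^n$, with $B_{u_j}(\mathcal{E}_j)\ge1-\lambda_1$ for all $j$ and $B_{u_j}(\mathcal{E}_k)\le\lambda_2$ for $j\ne k$; $N_{\mathrm{DI}}(n,\lambda_1,\lambda_2)$ is the largest such $N$. Logarithms base 2; $\dot{C}_{\mathrm{DI}}=\inf_{\lambda_1,\lambda_2>0}\liminf_{n\to\infty}\frac{1}{n\log n}\log N_{\mathrm{DI}}(n,\lambda_1,\lambda_2)$. *)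

theory Defs
  imports Complex_Main "HOL-Library.Extended_Real" "HOL-Library.Liminf_Limsup"
begin

definition bern_prob :: "real list \<Rightarrow> bool list \<Rightarrow> real" where
  "bern_prob xs ys = prod_list (map2 (\<lambda>x y. if y then x else 1 - x) xs ys)"

definition bern_set :: "real list \<Rightarrow> bool list set \<Rightarrow> real" where
  "bern_set xs E = (\<Sum>ys\<in>E. bern_prob xs ys)"

definition is_DI_code ::
  "real \<Rightarrow> real \<Rightarrow> nat \<Rightarrow> nat \<Rightarrow> real \<Rightarrow> real \<Rightarrow>
   (nat \<Rightarrow> real list) \<Rightarrow> (nat \<Rightarrow> bool list set) \<Rightarrow> bool" where
  "is_DI_code a b n N l1 l2 u E \<longleftrightarrow>
     (\<forall>j<N. length (u j) = n \<and> set (u j) \<subseteq> {a..b} \<and> E j \<subseteq> {ys. length ys = n}) \<and>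
     (\<forall>j<N. bern_set (u j) (E j) \<ge> 1 - l1) \<and>
     (\<forall>j<N. \<forall>k<N. j \<noteq> k \<longrightarrow> bern_set (u j) (E k) \<le> l2)"

text \<open>Largest code size (possibly infinite, hence extended real).\<close>
definition N_DI :: "real \<Rightarrow> real \<Rightarrow> nat \<Rightarrow> real \<Rightarrow> real \<Rightarrow> ereal" where
  "N_DI a b n l1 l2 = Sup {ereal (real N) | N. \<exists>u E. is_DI_code a b n N l1 l2 u E}"

definition DI_rate :: "real \<Rightarrow> real \<Rightarrow> real \<Rightarrow> real \<Rightarrow> nat \<Rightarrow> ereal" where
  "DI_rate a b l1 l2 n =
     (if N_DI a b n l1 l2 = \<infinity> then \<infinity>
      else ereal (log 2 (real_of_ereal (N_DI a b n l1 l2)) / (real n * log 2 (real n))))"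

definition C_DI_dot :: "real \<Rightarrow> real \<Rightarrow> ereal" where
  "C_DI_dot a b = (INF l1\<in>{0<..}. INF l2\<in>{0<..}. liminf (DI_rate a b l1 l2))"

end

theory Submission
  imports Defs "HOL-Analysis.Analysis"
begin
lemma words_Suc: "{ys::bool list. length ys = Suc n} = (\<lambda>(b,ys). b#ys) ` (UNIV \<times> {ys. length ys = n})"
  by (auto simp: length_Suc_conv image_def)
lemma finite_words: "finite {ys::bool list. length ys = n}"
  using finite_lists_length_eq[of "UNIV::bool set" n] by simp
lemma sum_words_Suc: "(\<Sum>ys\<in>{ys::bool list. length ys = Suc n}. F ys) = (\<Sum>ys\<in>{ys. length ys = n}. F (True#ys) + F (False#ys))"
proof -
  let ?W = "{ys::bool list. length ys = n}"
  have eq: "{ys::bool list. length ys = Suc n} = Cons True ` ?W \<union> Cons False ` ?W"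
    by (auto simp: length_Suc_conv image_def)
  have "(\<Sum>ys\<in>{ys::bool list. length ys = Suc n}. F ys) = sum F (Cons True ` ?W) + sum F (Cons False ` ?W)"
    unfolding eq by (rule sum.union_disjoint) (auto intro: finite_words)
  also have "\<dots> = (\<Sum>ys\<in>?W. F (True#ys)) + (\<Sum>ys\<in>?W. F (False#ys))"
    by (simp add: sum.reindex)
  finally show ?thesis by (simp add: sum.distrib)
qed
lemma bp_Cons[simp]: "bern_prob (x#xs) (y#ys) = (if y then x else 1 - x) * bern_prob xs ys"
  by (simp add: bern_prob_def)
lemma bp_Nil[simp]: "bern_prob [] ys = 1"
  by (simp add: bern_prob_def)

lemma sum_P: "length xs = n \<Longrightarrow> (\<Sum>ys\<in>{ys::bool list. length ys = n}. bern_prob xs ys) = 1"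
proof (induction xs arbitrary: n)
  case Nil then show ?case by simp
next
  case (Cons x xs)
  then obtain m where n: "n = Suc m" and m: "length xs = m" by auto
  show ?case unfolding n sum_words_Suc
    by (simp add: sum.distrib Cons.IH[OF m] flip: sum_distrib_left)
qed

lemma exp_sum: "length xs = n \<Longrightarrow> (\<Sum>ys\<in>{ys::bool list. length ys = n}. bern_prob xs ys * (\<Sum>i<n. f i (ys!i)))
   = (\<Sum>i<n. xs!i * f i True + (1 - xs!i) * f i False)"
proof (induction xs arbitrary: n f)
  case Nil then show ?case by simp
next
  case (Cons x xs)
  then obtain m where n: "n = Suc m" and m: "length xs = m" by auto
  have IH: "(\<Sum>ys\<in>{ys::bool list. length ys = m}. bern_prob xs ys * (\<Sum>i<m. f (Suc i) (ys!i)))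
     = (\<Sum>i<m. xs!i * f (Suc i) True + (1 - xs!i) * f (Suc i) False)"
    using Cons.IH[OF m, of "\<lambda>i. f (Suc i)"] .
  have P1: "(\<Sum>ys\<in>{ys::bool list. length ys = m}. bern_prob xs ys) = 1" using sum_P[OF m] .
  have "(\<Sum>ys\<in>{ys::bool list. length ys = n}. bern_prob (x#xs) ys * (\<Sum>i<n. f i (ys!i)))
    = (\<Sum>ys\<in>{ys::bool list. length ys = m}. x * (bern_prob xs ys * f 0 True) + (1-x) * (bern_prob xs ys * f 0 False)
        + bern_prob xs ys * (\<Sum>i<m. f (Suc i) (ys!i)))"
    unfolding n sum_words_Suc by (intro sum.cong) (auto simp del: sum.lessThan_Suc simp add: sum.lessThan_Suc_shift algebra_simps)
  also have "\<dots> = x * f 0 True + (1-x) * f 0 False + (\<Sum>i<m. xs!i * f (Suc i) True + (1 - xs!i) * f (Suc i) False)"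
    by (simp add: sum.distrib IH flip: sum_distrib_left sum_distrib_right add: P1)
  finally show ?case unfolding n by (simp del: sum.lessThan_Suc add: sum.lessThan_Suc_shift)
qed

lemma var_sum: "length xs = n \<Longrightarrow> (\<forall>i<n. xs!i * f i True + (1 - xs!i) * f i False = 0) \<Longrightarrow>
   (\<Sum>ys\<in>{ys::bool list. length ys = n}. bern_prob xs ys * (\<Sum>i<n. f i (ys!i))^2)
   = (\<Sum>i<n. xs!i * (f i True)^2 + (1 - xs!i) * (f i False)^2)"
proof (induction xs arbitrary: n f)
  case Nil then show ?case by simp
next
  case (Cons x xs)
  then obtain m where n: "n = Suc m" and m: "length xs = m" by auto
  have c: "\<forall>i<m. xs!i * f (Suc i) True + (1 - xs!i) * f (Suc i) False = 0" using Cons.prems(2) n by auto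
  have c0: "x * f 0 True + (1 - x) * f 0 False = 0" using Cons.prems(2) n by auto
  have IH: "(\<Sum>ys\<in>{ys::bool list. length ys = m}. bern_prob xs ys * (\<Sum>i<m. f (Suc i) (ys!i))^2)
     = (\<Sum>i<m. xs!i * (f (Suc i) True)^2 + (1 - xs!i) * (f (Suc i) False)^2)"
    using Cons.IH[OF m c] .
  have E: "(\<Sum>ys\<in>{ys::bool list. length ys = m}. bern_prob xs ys * (\<Sum>i<m. f (Suc i) (ys!i))) = 0"
    using exp_sum[OF m, of "\<lambda>i. f (Suc i)"] c by simp
  have P1: "(\<Sum>ys\<in>{ys::bool list. length ys = m}. bern_prob xs ys) = 1" using sum_P[OF m] .
  let ?S = "\<lambda>ys. (\<Sum>i<m. f (Suc i) (ys!i))"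
  have "(\<Sum>ys\<in>{ys::bool list. length ys = n}. bern_prob (x#xs) ys * (\<Sum>i<n. f i (ys!i))^2)
    = (\<Sum>ys\<in>{ys::bool list. length ys = m}. (x * (f 0 True)^2 + (1-x) * (f 0 False)^2) * bern_prob xs ys
        + (2 * (x * f 0 True + (1-x) * f 0 False)) * (bern_prob xs ys * ?S ys)
        + bern_prob xs ys * (?S ys)^2)"
    unfolding n sum_words_Suc by (intro sum.cong) (auto simp del: sum.lessThan_Suc simp add: sum.lessThan_Suc_shift algebra_simps power2_eq_square)
  also have "\<dots> = (x * (f 0 True)^2 + (1-x) * (f 0 False)^2) + (\<Sum>i<m. xs!i * (f (Suc i) True)^2 + (1 - xs!i) * (f (Suc i) False)^2)"
    by (simp add: sum.distrib IH c0 flip: sum_distrib_left add: P1)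
  finally show ?case unfolding n by (simp del: sum.lessThan_Suc add: sum.lessThan_Suc_shift)
qed

lemma P_nonneg: "set xs \<subseteq> {0..1} \<Longrightarrow> bern_prob xs ys \<ge> 0"
proof (induction xs arbitrary: ys)
  case Nil then show ?case by simp
next
  case (Cons x xs) then show ?case by (cases ys) (auto simp: bern_prob_def)
qed

lemma sq4: "sqrt ((a*p)*(b*q)) = sqrt(a*b) * sqrt(p*q)"
  by (simp add: real_sqrt_mult[symmetric] ac_simps)

lemma hell_sum: "length xs = n \<Longrightarrow> length zs = n \<Longrightarrow>
  (\<Sum>ys\<in>{ys::bool list. length ys = n}. sqrt (bern_prob xs ys * bern_prob zs ys))
   = (\<Prod>i<n. sqrt (xs!i * zs!i) + sqrt ((1 - xs!i) * (1 - zs!i)))"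
proof (induction xs arbitrary: n zs)
  case Nil then show ?case by simp
next
  case (Cons x xs)
  then obtain m z zs' where n: "n = Suc m" and m: "length xs = m" and zs: "zs = z # zs'" and m': "length zs' = m"
    by (cases zs) auto
  have "(\<Sum>ys\<in>{ys::bool list. length ys = n}. sqrt (bern_prob (x#xs) ys * bern_prob zs ys))
     = (\<Sum>ys\<in>{ys::bool list. length ys = m}. sqrt (x*z) * sqrt (bern_prob xs ys * bern_prob zs' ys)
        + sqrt ((1-x)*(1-z)) * sqrt (bern_prob xs ys * bern_prob zs' ys))"
    unfolding n zs sum_words_Suc by (simp only: bp_Cons if_True if_False sq4)
  also have "\<dots> = (sqrt (x*z) + sqrt ((1-x)*(1-z))) * (\<Prod>i<m. sqrt (xs!i * zs'!i) + sqrt ((1 - xs!i) * (1 - zs'!i)))"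
    by (simp only: sum.distrib sum_distrib_left[symmetric] Cons.IH[OF m m']) (simp add: algebra_simps)
  finally show ?case unfolding n zs by (simp del: prod.lessThan_Suc add: prod.lessThan_Suc_shift)
qed

definition theta :: "real \<Rightarrow> real" where "theta x = arcsin (sqrt x)"

lemma theta_range: "0 \<le> x \<Longrightarrow> x \<le> 1 \<Longrightarrow> 0 \<le> theta x \<and> theta x \<le> pi/2"
proof -
  assume x: "0 \<le> x" "x \<le> 1"
  have s: "0 \<le> sqrt x" "sqrt x \<le> 1" using x by auto
  then have "arcsin 0 \<le> arcsin (sqrt x)" using arcsin_le_mono[of 0 "sqrt x"] by simp
  then show ?thesis unfolding theta_def using arcsin_bounded[of "sqrt x"] s by simp
qed

lemma bc_cos: assumes "0 \<le> x" "x \<le> 1" "0 \<le> z" "z \<le> 1"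
  shows "sqrt (x*z) + sqrt ((1-x)*(1-z)) = cos (theta x - theta z)"
proof -
  have s: "sin (theta y) = sqrt y" and c: "cos (theta y) = sqrt (1 - y)" if "0 \<le> y" "y \<le> 1" for y
  proof -
    have h0: "0 \<le> sqrt y" using that by simp
    have h1: "- 1 \<le> sqrt y" using h0 by linarith
    have h: "- 1 \<le> sqrt y" "sqrt y \<le> 1" using h1 that by auto
    show "sin (theta y) = sqrt y" unfolding theta_def using sin_arcsin[OF h] .
    show "cos (theta y) = sqrt (1 - y)" unfolding theta_def using cos_arcsin[OF h] that by simp
  qed
  show ?thesis using assms by (simp add: cos_diff s c real_sqrt_mult)
qed

lemma cos_lb: "1 - y^2/2 \<le> cos (y::real)"
proof -
  have "cos y = 1 - 2 * sin (y/2) ^ 2" using cos_double_sin[of "y/2"] by simp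
  moreover have "sin (y/2) ^ 2 \<le> (y/2)^2"
    using abs_sin_x_le_abs_x[of "y/2"] by (metis abs_le_square_iff)
  ultimately show ?thesis by (simp add: power_divide)
qed

lemma BC_bound:
  assumes len: "length xs = n" "length zs = n" and r: "set xs \<subseteq> {0..1}" "set zs \<subseteq> {0..1}"
    and cl: "\<forall>i<n. \<bar>theta (xs!i) - theta (zs!i)\<bar> \<le> e" and e: "0 \<le> e" "e \<le> 1"
  shows "1 - (\<Sum>ys\<in>{ys::bool list. length ys = n}. sqrt (bern_prob xs ys * bern_prob zs ys)) \<le> n * e^2 / 2"
proof -
  have "(1 - e^2/2) ^ n = (\<Prod>i<n. 1 - e^2/2)" by simp
  also have "\<dots> \<le> (\<Prod>i<n. sqrt (xs!i * zs!i) + sqrt ((1 - xs!i) * (1 - zs!i)))"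
  proof (rule prod_mono, safe)
    fix i assume i: "i < n"
    have "e^2 \<le> 1" using e by (simp add: power_le_one)
    then show "0 \<le> 1 - e^2/2" by simp
    have "xs!i \<in> set xs" "zs!i \<in> set zs" using i len by simp_all
    then have xi: "xs!i \<in> {0..1}" "zs!i \<in> {0..1}" using r by blast+
    have "(theta (xs!i) - theta (zs!i))^2 \<le> e^2"
      using cl i by (metis abs_le_square_iff abs_of_nonneg e(1))
    then have "1 - e^2/2 \<le> cos (theta (xs!i) - theta (zs!i))"
      using cos_lb[of "theta (xs!i) - theta (zs!i)"] by linarith
    then show "1 - e^2/2 \<le> sqrt (xs!i * zs!i) + sqrt ((1 - xs!i) * (1 - zs!i))"
      using bc_cos[of "xs!i" "zs!i"] xi by auto
  qed
  also have "\<dots> = (\<Sum>ys\<in>{ys::bool list. length ys = n}. sqrt (bern_prob xs ys * bern_prob zs ys))"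
    using hell_sum[OF len] by simp
  finally have 1: "(1 - e^2/2) ^ n \<le> (\<Sum>ys\<in>{ys::bool list. length ys = n}. sqrt (bern_prob xs ys * bern_prob zs ys))" .
  have "1 + real n * (- (e^2/2)) \<le> (1 + - (e^2/2)) ^ n"
    by (rule Bernoulli_inequality) (use e power_le_one[of e 2] in simp)
  with 1 show ?thesis by simp
qed

lemma tv_bound:
  assumes len: "length xs = n" "length zs = n" and r: "set xs \<subseteq> {0..1}" "set zs \<subseteq> {0..1}"
    and E: "E \<subseteq> {ys. length ys = n}"
  shows "bern_set xs E - bern_set zs E \<le>
     2 * sqrt (2 * (1 - (\<Sum>ys\<in>{ys::bool list. length ys = n}. sqrt (bern_prob xs ys * bern_prob zs ys))))"
proof -
  let ?W = "{ys::bool list. length ys = n}"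
  let ?P = "bern_prob xs" and ?Q = "bern_prob zs"
  define BC where "BC = (\<Sum>ys\<in>?W. sqrt (?P ys * ?Q ys))"
  have fin: "finite ?W" by (rule finite_words)
  have P0: "\<And>ys. ?P ys \<ge> 0" and Q0: "\<And>ys. ?Q ys \<ge> 0" using P_nonneg r by auto
  have sP: "sum ?P ?W = 1" using sum_P[OF len(1)] .
  have sQ: "sum ?Q ?W = 1" using sum_P[OF len(2)] .
  have "bern_set xs E - bern_set zs E = (\<Sum>ys\<in>E. ?P ys - ?Q ys)"
    by (simp add: bern_set_def sum_subtractf)
  also have "\<dots> \<le> (\<Sum>ys\<in>E. \<bar>?P ys - ?Q ys\<bar>)" by (rule sum_mono) simp
  also have "\<dots> \<le> (\<Sum>ys\<in>?W. \<bar>?P ys - ?Q ys\<bar>)"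
    by (rule sum_mono2[OF fin E]) simp
  also have "\<dots> = (\<Sum>ys\<in>?W. \<bar>sqrt (?P ys) - sqrt (?Q ys)\<bar> * (sqrt (?P ys) + sqrt (?Q ys)))"
  proof (rule sum.cong)
    fix ys
    have "?P ys - ?Q ys = (sqrt (?P ys) - sqrt (?Q ys)) * (sqrt (?P ys) + sqrt (?Q ys))"
      using P0[of ys] Q0[of ys] by (simp add: algebra_simps)
    moreover have "0 \<le> sqrt (?P ys) + sqrt (?Q ys)" using P0[of ys] Q0[of ys] by simp
    ultimately show "\<bar>?P ys - ?Q ys\<bar> = \<bar>sqrt (?P ys) - sqrt (?Q ys)\<bar> * (sqrt (?P ys) + sqrt (?Q ys))"
      by (metis abs_mult abs_of_nonneg)
  qed simp
  finally have 1: "bern_set xs E - bern_set zs E \<le> (\<Sum>ys\<in>?W. \<bar>sqrt (?P ys) - sqrt (?Q ys)\<bar> * (sqrt (?P ys) + sqrt (?Q ys)))" .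
  have A: "(\<Sum>ys\<in>?W. \<bar>sqrt (?P ys) - sqrt (?Q ys)\<bar>^2) = 2 - 2 * BC"
  proof -
    have "(\<Sum>ys\<in>?W. \<bar>sqrt (?P ys) - sqrt (?Q ys)\<bar>^2) = (\<Sum>ys\<in>?W. ?P ys + ?Q ys - 2 * sqrt (?P ys * ?Q ys))"
      by (rule sum.cong) (auto simp: power2_diff P0 Q0 real_sqrt_mult)
    then show ?thesis by (simp add: sum.distrib sum_subtractf sP sQ BC_def sum_distrib_left)
  qed
  have B: "(\<Sum>ys\<in>?W. (sqrt (?P ys) + sqrt (?Q ys))^2) = 2 + 2 * BC"
  proof -
    have "(\<Sum>ys\<in>?W. (sqrt (?P ys) + sqrt (?Q ys))^2) = (\<Sum>ys\<in>?W. ?P ys + ?Q ys + 2 * sqrt (?P ys * ?Q ys))"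
      by (rule sum.cong) (auto simp: power2_sum P0 Q0 real_sqrt_mult)
    then show ?thesis by (simp add: sum.distrib sP sQ BC_def sum_distrib_left)
  qed
  have BC1: "BC \<le> 1"
  proof -
    have "BC \<le> (\<Sum>ys\<in>?W. (?P ys + ?Q ys)/2)" unfolding BC_def
    proof (rule sum_mono)
      fix ys
      have "sqrt (?P ys * ?Q ys) \<le> (?P ys + ?Q ys)/2"
        using arith_geo_mean_sqrt[OF P0[of ys] Q0[of ys]] by simp
      then show "sqrt (?P ys * ?Q ys) \<le> (?P ys + ?Q ys)/2" .
    qed
    also have "\<dots> = 1" by (simp add: sum_divide_distrib[symmetric] sum.distrib sP sQ)
    finally show ?thesis .
  qed
  have BC0: "BC \<ge> 0" unfolding BC_def by (intro sum_nonneg real_sqrt_ge_zero mult_nonneg_nonneg P0 Q0)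
  have "(\<Sum>ys\<in>?W. \<bar>sqrt (?P ys) - sqrt (?Q ys)\<bar> * (sqrt (?P ys) + sqrt (?Q ys)))^2 \<le> (2 - 2*BC) * (2 + 2*BC)"
    using Cauchy_Schwarz_ineq_sum[of "\<lambda>ys. \<bar>sqrt (?P ys) - sqrt (?Q ys)\<bar>" "\<lambda>ys. sqrt (?P ys) + sqrt (?Q ys)" ?W]
    unfolding A B .
  also have "\<dots> \<le> (2 - 2*BC) * 4"
    by (rule mult_left_mono) (use BC1 BC0 in linarith)+
  also have "\<dots> = (2 * sqrt (2 * (1 - BC)))^2"
  proof -
    have "(sqrt (2 * (1 - BC)))^2 = 2 * (1 - BC)" using BC1 by (intro real_sqrt_pow2) simp
    then show ?thesis by (simp add: power_mult_distrib)
  qed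
  finally have sq: "(\<Sum>ys\<in>?W. \<bar>sqrt (?P ys) - sqrt (?Q ys)\<bar> * (sqrt (?P ys) + sqrt (?Q ys)))^2 \<le> (2 * sqrt (2 * (1 - BC)))^2" .
  have "(\<Sum>ys\<in>?W. \<bar>sqrt (?P ys) - sqrt (?Q ys)\<bar> * (sqrt (?P ys) + sqrt (?Q ys))) \<le> 2 * sqrt (2 * (1 - BC))"
    by (rule power2_le_imp_le[OF sq]) (simp add: BC1)
  with 1 show ?thesis unfolding BC_def by simp
qed

lemma code_card_bound:
  assumes code: "is_DI_code a b n N l1 l2 u E" and ab: "0 \<le> a" "b \<le> 1"
    and l: "l1 + l2 < 1" "l1 > 0" "l2 > 0" and n: "n \<ge> 1"
  shows "real N \<le> (2 * pi * sqrt n / (1 - l1 - l2) + 1) ^ n"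
proof -
  define d where "d = 1 - l1 - l2"
  have d0: "d > 0" and d1: "d \<le> 1" using l by (auto simp: d_def)
  have sn: "sqrt n \<ge> 1" using n by simp
  define e where "e = d / (4 * sqrt n)"
  have e0: "e > 0" using d0 sn by (simp add: e_def)
  have d4: "d \<le> 4 * sqrt n" using d1 sn by linarith
  have e1: "e \<le> 1" unfolding e_def using d4 sn by (simp add: divide_le_eq)
  define M where "M = nat \<lfloor>(pi/2) / e\<rfloor>"
  define cell where "cell j = map (\<lambda>x. nat \<lfloor>theta x / e\<rfloor>) (u j)" for j
  have cw: "length (u j) = n" "set (u j) \<subseteq> {0..1}" "E j \<subseteq> {ys. length ys = n}"
     "bern_set (u j) (E j) \<ge> 1 - l1" if "j < N" for j
  proof -
    have c1: "length (u j) = n \<and> set (u j) \<subseteq> {a..b} \<and> E j \<subseteq> {ys. length ys = n}"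
      and c2: "bern_set (u j) (E j) \<ge> 1 - l1"
      using code that unfolding is_DI_code_def by blast+
    have "{a..b} \<subseteq> {0..1::real}" using ab by auto
    then show "length (u j) = n" "set (u j) \<subseteq> {0..1}" "E j \<subseteq> {ys. length ys = n}"
     "bern_set (u j) (E j) \<ge> 1 - l1" using c1 c2 by blast+
  qed
  have cw2: "bern_set (u j) (E k) \<le> l2" if "j < N" "k < N" "j \<noteq> k" for j k
    using code that unfolding is_DI_code_def by blast
  have inj: "inj_on cell {..<N}"
  proof (rule inj_onI, rule ccontr)
    fix j k assume j: "j \<in> {..<N}" and k: "k \<in> {..<N}" and eq: "cell j = cell k" and ne: "j \<noteq> k"
    let ?x = "u j" and ?z = "u k"
    have close: "\<forall>i<n. \<bar>theta (?x!i) - theta (?z!i)\<bar> \<le> e"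
    proof (intro allI impI)
      fix i assume i: "i < n"
      have "?x!i \<in> set ?x" "?z!i \<in> set ?z" using i cw j k by auto
      then have r: "?x!i \<in> {0..1}" "?z!i \<in> {0..1}" using cw j k by blast+
      have t0: "theta (?x!i) / e \<ge> 0" "theta (?z!i) / e \<ge> 0" using theta_range r e0 by auto
      have "cell j ! i = cell k ! i" using eq by simp
      then have "nat \<lfloor>theta (?x!i) / e\<rfloor> = nat \<lfloor>theta (?z!i) / e\<rfloor>" using i cw j k by (simp add: cell_def)
      moreover have "0 \<le> \<lfloor>theta (?x!i) / e\<rfloor>" "0 \<le> \<lfloor>theta (?z!i) / e\<rfloor>" using t0 by simp_all
      ultimately have fl: "\<lfloor>theta (?x!i) / e\<rfloor> = \<lfloor>theta (?z!i) / e\<rfloor>" using eq_nat_nat_iff by blast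
      have lt: "\<bar>theta (?x!i) / e - theta (?z!i) / e\<bar> < 1"
        using fl floor_correct[of "theta (?x!i) / e"] floor_correct[of "theta (?z!i) / e"] by linarith
      have "theta (?x!i) - theta (?z!i) = e * (theta (?x!i) / e - theta (?z!i) / e)"
        using e0 by (simp add: field_simps)
      then have "\<bar>theta (?x!i) - theta (?z!i)\<bar> = e * \<bar>theta (?x!i) / e - theta (?z!i) / e\<bar>"
        using e0 by (simp add: abs_mult)
      also have "\<dots> \<le> e * 1" using lt e0 by (intro mult_left_mono) auto
      finally show "\<bar>theta (?x!i) - theta (?z!i)\<bar> \<le> e" by simp
    qed
    let ?BC = "(\<Sum>ys\<in>{ys::bool list. length ys = n}. sqrt (bern_prob ?x ys * bern_prob ?z ys))"
    have bc: "1 - ?BC \<le> n * e^2 / 2"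
      using BC_bound[of ?x n ?z e] cw j k close e0 e1 by auto
    have "1 - l1 - l2 \<le> bern_set ?x (E j) - bern_set ?z (E j)"
      using cw(4)[of j] cw2[of k j] j k ne by auto
    also have "\<dots> \<le> 2 * sqrt (2 * (1 - ?BC))"
      using tv_bound[of ?x n ?z "E j"] cw j k by auto
    also have "\<dots> \<le> 2 * sqrt (n * e^2)"
      using bc by (intro mult_left_mono real_sqrt_le_mono) auto
    also have "\<dots> = 2 * e * sqrt n" using e0 by (simp add: real_sqrt_mult)
    also have "\<dots> = d / 2" unfolding e_def using sn by simp
    finally show False using d0 unfolding d_def by simp
  qed
  let ?S = "{ws. set ws \<subseteq> {0..M} \<and> length ws = n}"
  have sub: "cell ` {..<N} \<subseteq> ?S"
  proof
    fix w assume "w \<in> cell ` {..<N}"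
    then obtain j where j: "j < N" and w: "w = cell j" by auto
    have "nat \<lfloor>theta x / e\<rfloor> \<le> M" if "x \<in> set (u j)" for x
    proof -
      have "x \<in> {0..1}" using cw(2)[OF j] that by blast
      then have "theta x \<le> pi/2" using theta_range by auto
      then have "theta x / e \<le> (pi/2) / e" using e0 by (intro divide_right_mono) auto
      then show ?thesis unfolding M_def by (intro nat_mono floor_mono)
    qed
    then show "w \<in> ?S" using w cw(1)[OF j] by (auto simp: cell_def)
  qed
  have "N = card (cell ` {..<N})" using card_image[OF inj] by simp
  also have "\<dots> \<le> card ?S" by (rule card_mono[OF _ sub]) (simp add: finite_lists_length_eq)
  also have "\<dots> = (M + 1) ^ n" by (simp add: card_lists_length_eq)
  finally have "real N \<le> real (M + 1) ^ n" by (metis of_nat_le_iff of_nat_power)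
  also have "\<dots> \<le> (2 * pi * sqrt n / (1 - l1 - l2) + 1) ^ n"
  proof (rule power_mono)
    have p0: "0 \<le> (pi/2) / e" using e0 by simp
    have "real M = of_int \<lfloor>(pi/2) / e\<rfloor>" unfolding M_def using p0 by simp
    also have "\<dots> \<le> (pi/2) / e" by (rule of_int_floor_le)
    finally have "real M \<le> (pi/2) / e" .
    also have "(pi/2) / e = 2 * pi * sqrt n / d" unfolding e_def using d0 sn
      by (simp add: field_simps)
    also have "\<dots> = 2 * pi * sqrt n / (1 - l1 - l2)" unfolding d_def ..
    finally show "real (M + 1) \<le> 2 * pi * sqrt n / (1 - l1 - l2) + 1" by simp
  qed simp
  finally show ?thesis .
qed

lemma cheb:
  assumes len: "length xs = n" and r: "set xs \<subseteq> {0..1}"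
    and cen: "\<forall>i<n. xs!i * f i True + (1 - xs!i) * f i False = 0"
    and tau: "\<tau> > 0" and A: "A \<subseteq> {ys. length ys = n}"
    and big: "\<forall>ys\<in>A. \<bar>\<Sum>i<n. f i (ys!i)\<bar> \<ge> \<tau>"
  shows "bern_set xs A \<le> (\<Sum>i<n. xs!i * (f i True)^2 + (1 - xs!i) * (f i False)^2) / \<tau>^2"
proof -
  let ?W = "{ys::bool list. length ys = n}"
  let ?S = "\<lambda>ys. \<Sum>i<n. f i (ys!i)"
  have P0: "\<And>ys. bern_prob xs ys \<ge> 0" using P_nonneg r by auto
  have "bern_set xs A * \<tau>^2 = (\<Sum>ys\<in>A. bern_prob xs ys * \<tau>^2)"
    unfolding bern_set_def by (rule sum_distrib_right)
  also have "\<dots> \<le> (\<Sum>ys\<in>A. bern_prob xs ys * (?S ys)^2)"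
  proof (rule sum_mono)
    fix ys assume "ys \<in> A"
    then have "\<tau> \<le> \<bar>?S ys\<bar>" using big by blast
    then have "\<tau>^2 \<le> (?S ys)^2" using tau by (metis abs_le_square_iff abs_of_pos)
    then show "bern_prob xs ys * \<tau>^2 \<le> bern_prob xs ys * (?S ys)^2" using P0 by (intro mult_left_mono)
  qed
  also have "\<dots> \<le> (\<Sum>ys\<in>?W. bern_prob xs ys * (?S ys)^2)"
    by (rule sum_mono2[OF finite_words A]) (simp add: P0)
  also have "\<dots> = (\<Sum>i<n. xs!i * (f i True)^2 + (1 - xs!i) * (f i False)^2)"
    by (rule var_sum[OF len cen])
  finally show ?thesis using tau by (simp add: pos_le_divide_eq)
qed

lemma greedy:
  fixes R :: "'a \<Rightarrow> 'a \<Rightarrow> bool"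
  assumes "finite X" and sym: "\<And>x y. R x y \<Longrightarrow> R y x"
    and deg: "\<forall>x\<in>X. card {y\<in>X. R x y} \<le> B"
  shows "\<exists>Y\<subseteq>X. (\<forall>x\<in>Y. \<forall>y\<in>Y. x \<noteq> y \<longrightarrow> \<not> R x y) \<and> card X \<le> (B + 1) * card Y"
  using assms(1,3)
proof (induction "card X" arbitrary: X rule: less_induct)
  case less
  show ?case
  proof (cases "X = {}")
    case True then show ?thesis by auto
  next
    case False
    then obtain x where x: "x \<in> X" by auto
    define X' where "X' = X - insert x {y\<in>X. R x y}"
    have fin': "finite X'" using less.prems by (simp add: X'_def)
    have "card X \<le> card X' + card (insert x {y\<in>X. R x y})"
    proof -
      have "X \<subseteq> X' \<union> insert x {y\<in>X. R x y}" by (auto simp: X'_def)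
      then have "card X \<le> card (X' \<union> insert x {y\<in>X. R x y})"
        using less.prems fin' by (intro card_mono) auto
      also have "\<dots> \<le> card X' + card (insert x {y\<in>X. R x y})" by (rule card_Un_le)
      finally show ?thesis .
    qed
    also have "card (insert x {y\<in>X. R x y}) \<le> B + 1"
    proof -
      have fS: "finite {y\<in>X. R x y}" using less.prems by simp
      have "card (insert x {y\<in>X. R x y}) \<le> Suc (card {y\<in>X. R x y})" using fS by (simp add: card_insert_if)
      moreover have "card {y\<in>X. R x y} \<le> B" using less.prems x by blast
      ultimately show ?thesis by simp
    qed
    finally have c1: "card X \<le> card X' + (B + 1)" by simp
    have lt: "card X' < card X" using x less.prems by (intro psubset_card_mono) (auto simp: X'_def)
    have deg': "\<forall>z\<in>X'. card {y\<in>X'. R z y} \<le> B"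
    proof
      fix z assume z: "z \<in> X'"
      have "card {y\<in>X'. R z y} \<le> card {y\<in>X. R z y}"
        using less.prems by (intro card_mono) (auto simp: X'_def)
      also have "\<dots> \<le> B" using less.prems z by (auto simp: X'_def)
      finally show "card {y\<in>X'. R z y} \<le> B" .
    qed
    obtain Y' where Y': "Y' \<subseteq> X'" "\<forall>u\<in>Y'. \<forall>v\<in>Y'. u \<noteq> v \<longrightarrow> \<not> R u v" "card X' \<le> (B + 1) * card Y'"
      using less.hyps[OF lt fin' deg'] by blast
    define Y where "Y = insert x Y'"
    have xY': "x \<notin> Y'" using Y'(1) by (auto simp: X'_def)
    have finY': "finite Y'" using Y'(1) fin' finite_subset by blast
    have "Y \<subseteq> X" using Y'(1) x by (auto simp: Y_def X'_def)
    moreover have "\<forall>u\<in>Y. \<forall>v\<in>Y. u \<noteq> v \<longrightarrow> \<not> R u v"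
      using Y'(1,2) sym by (auto simp: Y_def X'_def)
    moreover have "card X \<le> (B + 1) * card Y"
      using c1 Y'(3) xY' finY' by (simp add: Y_def)
    ultimately show ?thesis by blast
  qed
qed

lemma ham_count:
  fixes w :: "nat list"
  assumes lw: "length w = n"
  shows "card {w' \<in> {ws. set ws \<subseteq> {0..q} \<and> length ws = n}. card {i\<in>{..<n}. w!i \<noteq> w'!i} < D} \<le> 2^n * (q+1)^D"
proof -
  let ?X = "{w' \<in> {ws. set ws \<subseteq> {0..q} \<and> length ws = n}. card {i\<in>{..<n}. w!i \<noteq> w'!i} < D}"
  let ?A = "{S. S \<subseteq> {..<n} \<and> card S < D}"
  let ?T = "Sigma ?A (\<lambda>S. PiE S (\<lambda>_. {0..q}))"
  define \<phi> where "\<phi> w' = ({i\<in>{..<n}. w!i \<noteq> w'!i}, restrict (\<lambda>i. w'!i) {i\<in>{..<n}. w!i \<noteq> w'!i})" for w'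
  have finA: "finite ?A" by (rule finite_subset[of _ "Pow {..<n}"]) auto
  have inj: "inj_on \<phi> ?X"
  proof (rule inj_onI)
    fix w1 w2 assume w1: "w1 \<in> ?X" and w2: "w2 \<in> ?X" and eq: "\<phi> w1 = \<phi> w2"
    have S: "{i\<in>{..<n}. w!i \<noteq> w1!i} = {i\<in>{..<n}. w!i \<noteq> w2!i}" using eq by (simp add: \<phi>_def)
    have "w1!i = w2!i" if i: "i < n" for i
    proof (cases "w!i \<noteq> w1!i")
      case True
      then have iS: "i \<in> {i\<in>{..<n}. w!i \<noteq> w1!i}" using i by simp
      have "snd (\<phi> w1) i = snd (\<phi> w2) i" using eq by simp
      then have "restrict (\<lambda>i. w1!i) {i\<in>{..<n}. w!i \<noteq> w1!i} i = restrict (\<lambda>i. w2!i) {i\<in>{..<n}. w!i \<noteq> w2!i} i"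
        by (simp only: \<phi>_def snd_conv)
      moreover have "i \<in> {i\<in>{..<n}. w!i \<noteq> w2!i}" using iS S by blast
      ultimately show ?thesis using iS by (simp only: restrict_apply' )
    next
      case False
      then have "i \<notin> {i\<in>{..<n}. w!i \<noteq> w2!i}" using S i by blast
      then show ?thesis using False i by simp
    qed
    then show "w1 = w2" using w1 w2 by (intro nth_equalityI) auto
  qed
  have sub: "\<phi> ` ?X \<subseteq> ?T"
  proof
    fix p assume "p \<in> \<phi> ` ?X"
    then obtain w' where w': "w' \<in> ?X" and p: "p = \<phi> w'" by auto
    have "w'!i \<in> {0..q}" if "i < n" for i
    proof -
      have "w'!i \<in> set w'" using w' that by simp
      then show ?thesis using w' by blast
    qed
    then show "p \<in> ?T" using w' unfolding p \<phi>_def by (auto simp: PiE_iff)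
  qed
  have "card ?X = card (\<phi> ` ?X)" using card_image[OF inj] by simp
  also have "\<dots> \<le> card ?T"
    by (rule card_mono[OF _ sub], rule finite_SigmaI[OF finA]) (auto intro!: finite_PiE dest: finite_subset)
  also have "\<dots> = (\<Sum>S\<in>?A. card (PiE S (\<lambda>_. {0..q::nat})))"
    using finA by (subst card_SigmaI) (auto intro!: finite_PiE dest: finite_subset)
  also have "\<dots> = (\<Sum>S\<in>?A. (q+1) ^ card S)"
  proof (rule sum.cong)
    fix S assume "S \<in> ?A"
    then have "finite S" using finite_subset by blast
    then show "card (PiE S (\<lambda>_. {0..q::nat})) = (q+1) ^ card S" by (simp add: card_PiE)
  qed simp
  also have "\<dots> \<le> (\<Sum>S\<in>?A. (q+1) ^ D)"
    by (rule sum_mono) (auto intro: power_increasing)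
  also have "\<dots> = card ?A * (q+1)^D" by simp
  also have "\<dots> \<le> 2^n * (q+1)^D"
  proof -
    have "card ?A \<le> card (Pow {..<n::nat})" by (rule card_mono) auto
    then show ?thesis by (simp add: card_Pow)
  qed
  finally show ?thesis .
qed

definition Zst :: "real list \<Rightarrow> bool list \<Rightarrow> real" where
  "Zst u ys = (\<Sum>i<length u. if ys!i then 1 - 2 * u!i else 0)"
definition mst :: "real list \<Rightarrow> real list \<Rightarrow> real" where
  "mst u v = (\<Sum>i<length u. v!i * (1 - 2 * u!i))"
definition Fst :: "real list \<Rightarrow> real" where
  "Fst x = (\<Sum>i<length x. x!i * (1 - x!i))"
definition Dset :: "real list \<Rightarrow> real \<Rightarrow> bool list set" where
  "Dset u t = {ys. length ys = length u \<and> \<bar>Zst u ys - mst u u\<bar> < t}"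

lemma in01: "set xs \<subseteq> {0..1} \<Longrightarrow> i < length xs \<Longrightarrow> 0 \<le> xs!i \<and> xs!i \<le> (1::real)"
proof -
  assume "set xs \<subseteq> {0..1}" "i < length xs"
  then have "xs!i \<in> {0..1}" using nth_mem by blast
  then show ?thesis by simp
qed

lemma dev_bound:
  assumes lu: "length u = n" and lv: "length v = n" and ru: "set u \<subseteq> {0..1}" and rv: "set v \<subseteq> {0..1}"
    and tau: "\<tau> > 0" and A: "A \<subseteq> {ys. length ys = n}"
    and big: "\<forall>ys\<in>A. \<bar>Zst u ys - mst u v\<bar> \<ge> \<tau>"
  shows "bern_set v A \<le> n / (4 * \<tau>^2)"
proof -
  define f where "f i y = (if y then 1 - 2 * u!i else 0) - v!i * (1 - 2 * u!i)" for i y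
  have cen: "\<forall>i<n. v!i * f i True + (1 - v!i) * f i False = 0"
    by (simp add: f_def algebra_simps)
  have S: "(\<Sum>i<n. f i (ys!i)) = Zst u ys - mst u v" for ys
    unfolding f_def Zst_def mst_def lu by (simp add: sum_subtractf)
  have big': "\<forall>ys\<in>A. \<bar>\<Sum>i<n. f i (ys!i)\<bar> \<ge> \<tau>" using big S by simp
  have "bern_set v A \<le> (\<Sum>i<n. v!i * (f i True)^2 + (1 - v!i) * (f i False)^2) / \<tau>^2"
    by (rule cheb[OF lv rv cen tau A big'])
  also have "\<dots> \<le> (\<Sum>i<n. 1/4) / \<tau>^2"
  proof (intro divide_right_mono sum_mono)
    fix i assume "i \<in> {..<n}"
    then have i: "i < n" by simp
    have u01: "0 \<le> u!i" "u!i \<le> 1" using in01[OF ru] i lu by auto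
    have v01: "0 \<le> v!i" "v!i \<le> 1" using in01[OF rv] i lv by auto
    have eq: "v!i * (f i True)^2 + (1 - v!i) * (f i False)^2 = v!i * (1 - v!i) * (1 - 2 * u!i)^2"
      by (simp add: f_def power2_eq_square algebra_simps)
    have c1: "(1 - 2 * u!i)^2 = 1 - 4 * (u!i * (1 - u!i))" by (simp add: power2_eq_square algebra_simps)
    have c2: "u!i * (1 - u!i) \<ge> 0" using u01 by simp
    have c: "(1 - 2 * u!i)^2 \<le> 1" using c1 c2 by linarith
    have vv1: "1/4 - v!i * (1 - v!i) = (v!i - 1/2)^2" by (simp add: power2_eq_square algebra_simps)
    have vv: "v!i * (1 - v!i) \<le> 1/4" using vv1 zero_le_power2[of "v!i - 1/2"] by linarith
    have "v!i * (1 - v!i) * (1 - 2 * u!i)^2 \<le> v!i * (1 - v!i) * 1"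
      using c v01 by (intro mult_left_mono) auto
    then show "v!i * (f i True)^2 + (1 - v!i) * (f i False)^2 \<le> 1/4" using eq vv by linarith
  qed simp
  also have "\<dots> = n / (4 * \<tau>^2)" by simp
  finally show ?thesis .
qed

lemma mdiff:
  assumes "length u = n" "length v = n"
  shows "mst u v - mst u u = (\<Sum>i<n. (v!i - u!i)^2) + (Fst v - Fst u)"
  using assms unfolding mst_def Fst_def
  by (simp add: sum_subtractf[symmetric] sum.distrib[symmetric] power2_eq_square algebra_simps)

lemma typeI:
  assumes lu: "length u = n" and ru: "set u \<subseteq> {0..1}" and tau: "\<tau> > 0"
  shows "bern_set u (Dset u \<tau>) \<ge> 1 - n / (4 * \<tau>^2)"
proof -
  let ?W = "{ys::bool list. length ys = n}"
  have D: "Dset u \<tau> \<subseteq> ?W" using lu by (auto simp: Dset_def)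
  have c: "bern_set u (?W - Dset u \<tau>) \<le> n / (4 * \<tau>^2)"
    by (rule dev_bound[OF lu lu ru ru tau]) (auto simp: Dset_def lu)
  have "sum (bern_prob u) ?W = sum (bern_prob u) (?W - Dset u \<tau>) + sum (bern_prob u) (Dset u \<tau>)"
    by (rule sum.subset_diff[OF D finite_words])
  then have "1 = bern_set u (?W - Dset u \<tau>) + bern_set u (Dset u \<tau>)"
    using sum_P[OF lu] by (simp add: bern_set_def)
  then show ?thesis using c by linarith
qed

lemma typeII:
  assumes lu: "length u = n" and lv: "length v = n" and ru: "set u \<subseteq> {0..1}" and rv: "set v \<subseteq> {0..1}"
    and t1: "\<tau>1 > 0" and t2: "\<tau>2 > 0" and sep: "\<bar>mst u v - mst u u\<bar> \<ge> \<tau>1 + \<tau>2"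
  shows "bern_set v (Dset u \<tau>1) \<le> n / (4 * \<tau>2^2)"
proof (rule dev_bound[OF lu lv ru rv t2])
  show "Dset u \<tau>1 \<subseteq> {ys. length ys = n}" using lu by (auto simp: Dset_def)
  show "\<forall>ys\<in>Dset u \<tau>1. \<tau>2 \<le> \<bar>Zst u ys - mst u v\<bar>"
  proof
    fix ys assume "ys \<in> Dset u \<tau>1"
    then have "\<bar>Zst u ys - mst u u\<bar> < \<tau>1" by (simp add: Dset_def)
    then show "\<tau>2 \<le> \<bar>Zst u ys - mst u v\<bar>" using sep by linarith
  qed
qed

lemma pigeon:
  assumes fin: "finite X" and b: "\<forall>x\<in>X. \<beta> x \<le> (n::nat)"
  shows "\<exists>t\<le>n. card X \<le> (n+1) * card {x\<in>X. \<beta> x = t}"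
proof (rule ccontr)
  assume "\<not> ?thesis"
  then have lt: "\<forall>t\<in>{..n}. (n+1) * card {x\<in>X. \<beta> x = t} < card X" by auto
  have "X \<subseteq> (\<Union>t\<in>{..n}. {x\<in>X. \<beta> x = t})" using b by auto
  then have "card X \<le> card (\<Union>t\<in>{..n}. {x\<in>X. \<beta> x = t})"
    by (intro card_mono) (auto simp: fin)
  also have "\<dots> \<le> (\<Sum>t\<in>{..n}. card {x\<in>X. \<beta> x = t})" by (rule card_UN_le) simp
  finally have c0: "card X \<le> (\<Sum>t\<in>{..n}. card {x\<in>X. \<beta> x = t})" .
  have c: "(n+1) * card X \<le> (n+1) * (\<Sum>t\<in>{..n}. card {x\<in>X. \<beta> x = t})"
    using c0 by (rule mult_le_mono2)
  have "(n+1) * (\<Sum>t\<in>{..n}. card {x\<in>X. \<beta> x = t}) = (\<Sum>t\<in>{..n}. (n+1) * card {x\<in>X. \<beta> x = t})"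
    by (simp add: sum_distrib_left)
  also have "\<dots> < (\<Sum>t\<in>{..n}. card X)" by (rule sum_strict_mono) (use lt in auto)
  also have "\<dots> = (n+1) * card X" by simp
  finally show False using c by simp
qed

definition gridv :: "real \<Rightarrow> real \<Rightarrow> nat \<Rightarrow> nat \<Rightarrow> real" where
  "gridv a b q k = a + (b - a) * real k / real q"

lemma gridv_range: "a \<le> b \<Longrightarrow> q \<ge> 1 \<Longrightarrow> k \<le> q \<Longrightarrow> gridv a b q k \<in> {a..b}"
proof -
  assume ab: "a \<le> b" and q: "q \<ge> 1" and k: "k \<le> q"
  have "real k / real q \<le> 1" using k q by simp
  moreover have "0 \<le> real k / real q" by simp
  ultimately have h1: "(b - a) * (real k / real q) \<le> (b - a) * 1" and h2: "0 \<le> (b - a) * (real k / real q)"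
    using ab by (intro mult_left_mono mult_nonneg_nonneg; simp)+
  have "gridv a b q k = a + (b - a) * (real k / real q)" by (simp add: gridv_def)
  then show ?thesis using h1 h2 by simp
qed

lemma gridv_diff: "q \<ge> 1 \<Longrightarrow> k \<noteq> k' \<Longrightarrow> (gridv a b q k - gridv a b q k')^2 \<ge> ((b - a) / q)^2"
proof -
  assume q: "q \<ge> 1" and ne: "k \<noteq> k'"
  have q0: "real q \<noteq> 0" using q by simp
  have e: "gridv a b q k - gridv a b q k' = ((b - a) / q) * (real k - real k')"
    using q0 by (simp add: gridv_def field_simps)
  have "1 \<le> \<bar>real k - real k'\<bar>" using ne by linarith
  then have "1 \<le> (real k - real k')^2" by (metis abs_le_square_iff abs_one one_power2)
  then have "((b - a) / q)^2 * 1 \<le> ((b - a) / q)^2 * (real k - real k')^2"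
    by (intro mult_left_mono) auto
  then show ?thesis unfolding e power_mult_distrib by (simp only: mult_1_right)
qed

lemma grid_sep:
  assumes q: "q \<ge> 1" and l: "length ws = n" "length ws' = n"
    and D: "card {i\<in>{..<n}. ws!i \<noteq> ws'!i} \<ge> D"
  shows "(\<Sum>i<n. (gridv a b q (ws!i) - gridv a b q (ws'!i))^2) \<ge> real D * ((b - a) / q)^2"
proof -
  let ?S = "{i\<in>{..<n}. ws!i \<noteq> ws'!i}"
  have "real D * ((b - a) / q)^2 \<le> real (card ?S) * ((b - a) / q)^2"
    using D by (intro mult_right_mono) auto
  also have "\<dots> = (\<Sum>i\<in>?S. ((b - a) / q)^2)" by simp
  also have "\<dots> \<le> (\<Sum>i\<in>?S. (gridv a b q (ws!i) - gridv a b q (ws'!i))^2)"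
    by (rule sum_mono) (use gridv_diff[OF q] in auto)
  also have "\<dots> \<le> (\<Sum>i<n. (gridv a b q (ws!i) - gridv a b q (ws'!i))^2)"
    by (rule sum_mono2) auto
  finally show ?thesis .
qed

lemma same_bucket:
  assumes "nat \<lfloor>x / s\<rfloor> = nat \<lfloor>y / s\<rfloor>" "x \<ge> 0" "y \<ge> 0" "s > (0::real)"
  shows "\<bar>x - y\<bar> < s"
proof -
  have "0 \<le> \<lfloor>x / s\<rfloor>" "0 \<le> \<lfloor>y / s\<rfloor>" using assms by simp_all
  then have fl: "\<lfloor>x / s\<rfloor> = \<lfloor>y / s\<rfloor>" using assms(1) eq_nat_nat_iff by blast
  have lt: "\<bar>x / s - y / s\<bar> < 1"
    using fl floor_correct[of "x / s"] floor_correct[of "y / s"] by linarith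
  have "x - y = s * (x / s - y / s)" using assms(4) by (simp add: field_simps)
  then have "\<bar>x - y\<bar> = s * \<bar>x / s - y / s\<bar>" using assms(4) by (simp add: abs_mult)
  also have "\<dots> < s * 1" using lt assms(4) by (intro mult_strict_left_mono) auto
  finally show ?thesis by simp
qed

lemma code_exists:
  fixes q D n :: nat and a b l1 l2 :: real
  assumes ab: "0 \<le> a" "a < b" "b \<le> 1" and l: "l1 > 0" "l2 > 0" and n: "n \<ge> 1" and q: "q \<ge> 1"
    and DD: "real D * ((b - a) / q)^2 \<ge> (1 + 1/(2* sqrt l1) + 1/(2* sqrt l2)) * sqrt n"
  shows "\<exists>N u E. is_DI_code a b n N l1 l2 u E \<and> (q+1)^n \<le> (n+1) * (2^n * (q+1)^D + 1) * (N::nat)"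
proof -
  define g where "g = gridv a b q"
  define U where "U ws = map g ws" for ws
  define X where "X = {ws. set ws \<subseteq> {0..q} \<and> length ws = n}"
  define K where "K = 1 + 1/(2* sqrt l1) + 1/(2* sqrt l2)"
  define B where "B = 2^n * (q+1)^D"
  have sn: "sqrt n \<ge> 1" using n by simp
  have finX: "finite X" unfolding X_def by (simp add: finite_lists_length_eq)
  have cardX: "card X = (q+1)^n" unfolding X_def by (simp add: card_lists_length_eq)
  have gr: "g k \<in> {a..b}" if "k \<le> q" for k using gridv_range[of a b q k] ab q that by (simp add: g_def)
  have UX: "length (U ws) = n \<and> set (U ws) \<subseteq> {a..b}" if "ws \<in> X" for ws
  proof -
    have "\<forall>k\<in>set ws. k \<le> q" using that by (auto simp: X_def)
    then show ?thesis using that gr by (auto simp: U_def X_def)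
  qed
  have ab01: "{a..b} \<subseteq> {0..1::real}" using ab by auto
  have UX01: "set (U ws) \<subseteq> {0..1}" if "ws \<in> X" for ws using UX[OF that] ab01 by blast
  have Frange: "0 \<le> Fst (U ws) \<and> Fst (U ws) \<le> n" if "ws \<in> X" for ws
  proof -
    have t: "0 \<le> U ws!i * (1 - U ws!i) \<and> U ws!i * (1 - U ws!i) \<le> 1" if "i < n" for i
    proof -
      have "0 \<le> U ws!i \<and> U ws!i \<le> 1" using in01[OF UX01[OF \<open>ws \<in> X\<close>]] UX[OF \<open>ws \<in> X\<close>] that by auto
      then show ?thesis by (simp add: mult_le_one)
    qed
    have "Fst (U ws) = (\<Sum>i<n. U ws!i * (1 - U ws!i))" using UX[OF that] by (simp add: Fst_def)
    moreover have "(\<Sum>i<n. U ws!i * (1 - U ws!i)) \<le> (\<Sum>i<n. 1)" by (rule sum_mono) (use t in auto)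
    moreover have "0 \<le> (\<Sum>i<n. U ws!i * (1 - U ws!i))" by (rule sum_nonneg) (use t in auto)
    ultimately show ?thesis by simp
  qed
  define \<beta> where "\<beta> ws = nat \<lfloor>Fst (U ws) / sqrt n\<rfloor>" for ws
  have \<beta>n: "\<forall>ws\<in>X. \<beta> ws \<le> n"
  proof
    fix ws assume ws: "ws \<in> X"
    have "Fst (U ws) / sqrt n \<le> n / 1" using Frange[OF ws] sn
      by (intro frac_le) auto
    then have "\<lfloor>Fst (U ws) / sqrt n\<rfloor> \<le> int n" by linarith
    then show "\<beta> ws \<le> n" unfolding \<beta>_def by linarith
  qed
  obtain t where t: "t \<le> n" "card X \<le> (n+1) * card {x\<in>X. \<beta> x = t}"
    using pigeon[OF finX \<beta>n] by blast
  define Xt where "Xt = {x\<in>X. \<beta> x = t}"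
  have finXt: "finite Xt" using finX by (simp add: Xt_def)
  define dist2 where "dist2 ws ws' = (\<Sum>i<n. (g (ws!i) - g (ws'!i))^2)" for ws ws'
  define R where "R ws ws' = (ws \<noteq> ws' \<and> dist2 ws ws' < K * sqrt n)" for ws ws'
  have dsym: "dist2 x y = dist2 y x" for x y unfolding dist2_def by (simp add: power2_commute)
  have Rsym: "\<And>x y. R x y \<Longrightarrow> R y x" unfolding R_def using dsym by auto
  have deg: "\<forall>x\<in>Xt. card {y\<in>Xt. R x y} \<le> B"
  proof
    fix x assume x: "x \<in> Xt"
    have lx: "length x = n" using x by (simp add: Xt_def X_def)
    have "{y\<in>Xt. R x y} \<subseteq> {w' \<in> X. card {i\<in>{..<n}. x!i \<noteq> w'!i} < D}"
    proof safe
      fix y assume y: "y \<in> Xt" and r: "R x y"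
      show "y \<in> X" using y by (simp add: Xt_def)
      show "card {i\<in>{..<n}. x!i \<noteq> y!i} < D"
      proof (rule ccontr)
        assume "\<not> ?thesis"
        then have "card {i\<in>{..<n}. x!i \<noteq> y!i} \<ge> D" by simp
        then have "dist2 x y \<ge> real D * ((b - a) / q)^2"
          unfolding dist2_def g_def using grid_sep[OF q lx] y by (simp add: Xt_def X_def)
        then show False using r DD by (simp add: R_def K_def)
      qed
    qed
    then have "card {y\<in>Xt. R x y} \<le> card {w' \<in> X. card {i\<in>{..<n}. x!i \<noteq> w'!i} < D}"
      by (intro card_mono) (simp_all add: finX)
    also have "\<dots> \<le> B" unfolding B_def X_def by (rule ham_count[OF lx])
    finally show "card {y\<in>Xt. R x y} \<le> B" .
  qed
  obtain Y where Y: "Y \<subseteq> Xt" "\<forall>x\<in>Y. \<forall>y\<in>Y. x \<noteq> y \<longrightarrow> \<not> R x y" "card Xt \<le> (B + 1) * card Y"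
    using greedy[OF finXt Rsym deg] by blast
  have finY: "finite Y" using Y(1) finXt finite_subset by blast
  obtain \<phi> where \<phi>: "bij_betw \<phi> {0..<card Y} Y" using ex_bij_betw_nat_finite[OF finY] by blast
  define N where "N = card Y"
  define \<tau>1 where "\<tau>1 = sqrt n / (2 * sqrt l1)"
  define \<tau>2 where "\<tau>2 = sqrt n / (2 * sqrt l2)"
  have t1: "\<tau>1 > 0" and t2: "\<tau>2 > 0" using sn l by (simp_all add: \<tau>1_def \<tau>2_def)
  have e1: "n / (4 * \<tau>1^2) = l1" using l n by (simp add: \<tau>1_def power_divide power_mult_distrib)
  have e2: "n / (4 * \<tau>2^2) = l2" using l n by (simp add: \<tau>2_def power_divide power_mult_distrib)
  define u where "u j = U (\<phi> j)" for j
  define E where "E j = Dset (u j) \<tau>1" for j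
  have \<phi>X: "\<phi> j \<in> Xt" if "j < N" for j using \<phi> Y(1) that by (auto simp: N_def bij_betw_def)
  have code: "is_DI_code a b n N l1 l2 u E"
    unfolding is_DI_code_def
  proof (intro conjI allI impI)
    fix j assume j: "j < N"
    have jX: "\<phi> j \<in> X" using \<phi>X[OF j] by (simp add: Xt_def)
    show "length (u j) = n" "set (u j) \<subseteq> {a..b}" using UX[OF jX] by (simp_all add: u_def)
    show "E j \<subseteq> {ys. length ys = n}" using UX[OF jX] by (auto simp: E_def Dset_def u_def)
    show "bern_set (u j) (E j) \<ge> 1 - l1"
      using typeI[of "u j" n \<tau>1] UX[OF jX] UX01[OF jX] t1 e1 by (simp add: E_def u_def)
  next
    fix j k assume j: "j < N" and k: "k < N" and jk: "j \<noteq> k"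
    have jX: "\<phi> j \<in> X" and kX: "\<phi> k \<in> X" using \<phi>X[OF j] \<phi>X[OF k] by (simp_all add: Xt_def)
    have ne: "\<phi> j \<noteq> \<phi> k" using \<phi> j k jk by (auto simp: N_def bij_betw_def inj_on_def)
    have "\<phi> j \<in> Y" "\<phi> k \<in> Y" using \<phi> j k by (auto simp: N_def bij_betw_def)
    then have "\<not> R (\<phi> j) (\<phi> k)" using Y(2) ne by blast
    then have dd: "dist2 (\<phi> j) (\<phi> k) \<ge> K * sqrt n" using ne by (simp add: R_def)
    have lj: "length (\<phi> j) = n" and lk: "length (\<phi> k) = n" using jX kX by (simp_all add: X_def)
    have sq: "(\<Sum>i<n. (u j!i - u k!i)^2) = dist2 (\<phi> j) (\<phi> k)"
      unfolding dist2_def u_def U_def using lj lk by (intro sum.cong) auto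
    have bj: "\<beta> (\<phi> j) = \<beta> (\<phi> k)" using \<phi>X[OF j] \<phi>X[OF k] by (simp add: Xt_def)
    have Fd: "\<bar>Fst (u j) - Fst (u k)\<bar> < sqrt n"
      using same_bucket[of "Fst (u j)" "sqrt n" "Fst (u k)"] bj Frange[OF jX] Frange[OF kX] sn
      by (simp add: \<beta>_def u_def)
    have md: "mst (u k) (u j) - mst (u k) (u k) = (\<Sum>i<n. (u j!i - u k!i)^2) + (Fst (u j) - Fst (u k))"
      using mdiff[of "u k" n "u j"] UX[OF jX] UX[OF kX] by (simp add: u_def)
    have "\<tau>1 + \<tau>2 = (K - 1) * sqrt n" by (simp add: \<tau>1_def \<tau>2_def K_def algebra_simps)
    moreover have "(K - 1) * sqrt n = K * sqrt n - sqrt n" by (simp add: algebra_simps)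
    ultimately have sep: "\<bar>mst (u k) (u j) - mst (u k) (u k)\<bar> \<ge> \<tau>1 + \<tau>2"
      using md sq dd Fd by linarith
    show "bern_set (u j) (E k) \<le> l2"
      using typeII[of "u k" n "u j" \<tau>1 \<tau>2] UX[OF jX] UX[OF kX] UX01[OF jX] UX01[OF kX] t1 t2 sep e2
      by (simp add: E_def u_def)
  qed
  have "(q+1)^n \<le> (n+1) * card Xt" using t cardX by (simp add: Xt_def)
  also have "\<dots> \<le> (n+1) * ((B + 1) * N)" using Y(3) unfolding N_def by (rule mult_le_mono2)
  also have "\<dots> = (n+1) * (2^n * (q+1)^D + 1) * N" by (simp only: B_def mult.assoc)
  finally have "(q+1)^n \<le> (n+1) * (2^n * (q+1)^D + 1) * N" .
  with code show ?thesis by blast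
qed

lemma N_DI_lower: "is_DI_code a b n N l1 l2 u E \<Longrightarrow> ereal (real N) \<le> N_DI a b n l1 l2"
  unfolding N_DI_def by (rule Sup_upper) blast

lemma N_DI_nonneg: "0 \<le> N_DI a b n l1 l2"
proof -
  have "is_DI_code a b n 0 l1 l2 (\<lambda>_. []) (\<lambda>_. {})" by (simp add: is_DI_code_def)
  from N_DI_lower[OF this] show ?thesis by (simp add: zero_ereal_def)
qed

lemma N_DI_upper:
  assumes ab: "0 \<le> a" "b \<le> 1" and l: "l1 + l2 < 1" "l1 > 0" "l2 > 0" and n: "n \<ge> 1"
  shows "N_DI a b n l1 l2 \<le> ereal ((2 * pi * sqrt n / (1 - l1 - l2) + 1) ^ n)"
  unfolding N_DI_def
proof (rule Sup_least, safe)
  fix N u E assume "is_DI_code a b n N l1 l2 u E"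
  then show "ereal (real N) \<le> ereal ((2 * pi * sqrt n / (1 - l1 - l2) + 1) ^ n)"
    using code_card_bound[OF _ ab l n] by simp
qed

lemma rate_upper:
  assumes n: "n \<ge> 2" and up: "N_DI a b n l1 l2 \<le> ereal B" and B: "B \<ge> 1"
  shows "DI_rate a b l1 l2 n \<le> ereal (log 2 B / (real n * log 2 (real n)))"
proof -
  have fin: "N_DI a b n l1 l2 \<noteq> \<infinity>" using up by auto
  define r where "r = real_of_ereal (N_DI a b n l1 l2)"
  have Nr: "N_DI a b n l1 l2 = ereal r" using fin N_DI_nonneg[of a b n l1 l2] unfolding r_def
    by (cases "N_DI a b n l1 l2") auto
  have r0: "r \<ge> 0" and rB: "r \<le> B" using Nr N_DI_nonneg[of a b n l1 l2] up by auto
  have "log 2 r \<le> log 2 B"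
  proof (cases "r = 0")
    case True
    have "0 \<le> log 2 B" using B by simp
    moreover have "log 2 (0::real) = 0" by (simp add: log_def)
    ultimately show ?thesis using True by simp
  next
    case False then show ?thesis using r0 rB by (simp add: log_le_cancel_iff)
  qed
  moreover have "real n * log 2 (real n) > 0" using n by simp
  ultimately have "log 2 r / (real n * log 2 (real n)) \<le> log 2 B / (real n * log 2 (real n))"
    by (intro divide_right_mono) auto
  then show ?thesis unfolding DI_rate_def using fin by (simp add: r_def[symmetric])
qed

lemma rate_lower:
  assumes n: "n \<ge> 2" and lo: "ereal M \<le> N_DI a b n l1 l2" and M: "M \<ge> 1"
  shows "ereal (log 2 M / (real n * log 2 (real n))) \<le> DI_rate a b l1 l2 n"
proof (cases "N_DI a b n l1 l2 = \<infinity>")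
  case True then show ?thesis by (simp add: DI_rate_def)
next
  case False
  define r where "r = real_of_ereal (N_DI a b n l1 l2)"
  have Nr: "N_DI a b n l1 l2 = ereal r" using False N_DI_nonneg[of a b n l1 l2] unfolding r_def
    by (cases "N_DI a b n l1 l2") auto
  have rM: "M \<le> r" using Nr lo by auto
  have "log 2 M \<le> log 2 r" using rM M by (simp add: log_le_cancel_iff)
  moreover have "real n * log 2 (real n) > 0" using n by simp
  ultimately have "log 2 M / (real n * log 2 (real n)) \<le> log 2 r / (real n * log 2 (real n))"
    by (intro divide_right_mono) auto
  then show ?thesis unfolding DI_rate_def using False by (simp add: r_def[symmetric])
qed

lemma ratio_bound:
  assumes C: "C \<ge> 1" and x: "x \<ge> 1" "x \<le> C * sqrt (real n)" and n: "n \<ge> 2"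
  shows "log 2 (x ^ n) / (real n * log 2 (real n)) \<le> 1/2 + ln C / ln (real n)"
proof -
  have lnn: "ln (real n) > 0" using n by simp
  have "log 2 (x ^ n) / (real n * log 2 (real n)) = log 2 x / log 2 (real n)"
    using x n by (simp add: log_nat_power)
  also have "\<dots> = ln x / ln (real n)" by (simp add: log_def)
  also have "\<dots> \<le> ln (C * sqrt (real n)) / ln (real n)"
    using x C n lnn by (intro divide_right_mono) auto
  also have "ln (C * sqrt (real n)) = ln C + ln (real n) / 2"
    using C n by (simp add: ln_mult_pos ln_sqrt)
  also have "(ln C + ln (real n) / 2) / ln (real n) = 1/2 + ln C / ln (real n)"
    using lnn by (simp add: field_simps)
  finally show ?thesis .
qed

lemma ev_ln: "eventually (\<lambda>n. Z \<le> ln (real n)) sequentially"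
proof -
  have "filterlim (\<lambda>n. ln (real n)) at_top sequentially"
    by (rule filterlim_compose[OF ln_at_top filterlim_real_sequentially])
  then show ?thesis by (simp add: filterlim_at_top)
qed

lemma limsup_upper:
  assumes ab: "0 \<le> a" "b \<le> 1" and l: "l1 + l2 < 1" "l1 > 0" "l2 > 0"
  shows "limsup (DI_rate a b l1 l2) \<le> ereal (1/2)"
proof (rule ereal_le_epsilon2)
  fix \<eta> :: real assume eta: "\<eta> > 0"
  define d where "d = 1 - l1 - l2"
  have d0: "d > 0" using l by (simp add: d_def)
  define C where "C = 2 * pi / d + 1"
  have C1: "C \<ge> 1" using d0 by (simp add: C_def)
  have "eventually (\<lambda>n. DI_rate a b l1 l2 n \<le> ereal (1/2 + \<eta>)) sequentially"
    using ev_ln[of "max 1 (ln C / \<eta>)"]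
  proof (rule eventually_mono)
    fix n assume h: "max 1 (ln C / \<eta>) \<le> ln (real n)"
    have n2: "n \<ge> 2"
    proof (rule ccontr)
      assume "\<not> n \<ge> 2"
      then have "real n \<le> 1" by simp
      then have "ln (real n) \<le> 0" by (cases "n = 0") auto
      then show False using h by linarith
    qed
    have lnn: "ln (real n) > 0" using n2 by simp
    define x where "x = 2 * pi * sqrt n / d + 1"
    have sn: "sqrt (real n) \<ge> 1" using n2 by simp
    have x1: "x \<ge> 1" using d0 by (simp add: x_def)
    have xC: "x \<le> C * sqrt (real n)"
    proof -
      have "x = (2 * pi / d) * sqrt n + 1" by (simp add: x_def)
      also have "\<dots> \<le> (2 * pi / d) * sqrt n + sqrt n" using sn by simp
      also have "\<dots> = C * sqrt n" by (simp add: C_def algebra_simps)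
      finally show ?thesis .
    qed
    have "DI_rate a b l1 l2 n \<le> ereal (log 2 (x ^ n) / (real n * log 2 (real n)))"
      by (rule rate_upper[OF n2]) (use N_DI_upper[OF ab l] n2 x1 in \<open>simp_all add: x_def d_def\<close>)
    also have "\<dots> \<le> ereal (1/2 + ln C / ln (real n))"
      using ratio_bound[OF C1 x1 xC n2] by simp
    also have "ln C / ln (real n) \<le> \<eta>"
      using h lnn eta by (simp add: divide_le_eq mult.commute pos_divide_le_eq)
    then have "ereal (1/2 + ln C / ln (real n)) \<le> ereal (1/2 + \<eta>)" by simp
    finally show "DI_rate a b l1 l2 n \<le> ereal (1/2 + \<eta>)" .
  qed
  then have "limsup (DI_rate a b l1 l2) \<le> ereal (1/2 + \<eta>)" by (rule Limsup_bounded)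
  then show "limsup (DI_rate a b l1 l2) \<le> ereal (1/2) + ereal \<eta>" by simp
qed

lemma per_n:
  fixes n :: nat and a b l1 l2 \<epsilon> K c :: real
  assumes ab: "0 \<le> a" "a < b" "b \<le> 1" and l: "l1 > 0" "l2 > 0"
    and eps: "0 < \<epsilon>" "\<epsilon> \<le> 1/4"
    and K: "K = 1 + 1/(2 * sqrt l1) + 1/(2 * sqrt l2)"
    and c: "c = (b - a) * sqrt (\<epsilon> / K)"
    and hA: "c * sqrt (sqrt n) \<ge> 1" and hB: "\<epsilon> * n \<ge> 1" and hC: "ln c + \<epsilon> * ln n \<ge> 6"
    and n2: "n \<ge> 2"
  shows "ereal ((1 - 2*\<epsilon>) * (1/4 - \<epsilon>)) \<le> DI_rate a b l1 l2 n"
proof -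
  have K1: "K \<ge> 1" using K l by simp
  have c0: "c > 0" using c ab eps K1 by simp
  define s where "s = sqrt (sqrt (real n))"
  have s0: "s > 0" using n2 by (simp add: s_def)
  have s2: "s^2 = sqrt n" by (simp add: s_def)
  define q where "q = nat \<lfloor>c * s\<rfloor>"
  have q1: "q \<ge> 1" using hA unfolding q_def s_def by linarith
  have qle: "real q \<le> c * s" using hA unfolding q_def s_def by linarith
  have qge: "real q + 1 \<ge> c * s" unfolding q_def using hA s_def by linarith
  define y where "y = K * sqrt n * (real q)^2 / (b - a)^2"
  define D where "D = nat \<lceil>y\<rceil>"
  have y0: "y \<ge> 0" using K1 ab by (simp add: y_def)
  have Dy: "real D \<ge> y" "real D \<le> y + 1" unfolding D_def using y0 by linarith+
  have "(real q)^2 \<le> (c * s)^2" using qle by (intro power_mono) auto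
  also have "\<dots> = c^2 * sqrt n" by (simp add: power_mult_distrib s2)
  finally have q2: "(real q)^2 \<le> c^2 * sqrt n" .
  have c2: "c^2 = (b - a)^2 * \<epsilon> / K" using c eps K1 by (simp add: power_mult_distrib)
  have "y \<le> K * sqrt n * (c^2 * sqrt n) / (b - a)^2"
    unfolding y_def using q2 K1 ab by (intro divide_right_mono mult_left_mono) auto
  also have "\<dots> = (K * c^2) * (sqrt n * sqrt n) / (b - a)^2" by (simp add: algebra_simps)
  also have "\<dots> = \<epsilon> * n * ((b - a)^2 / (b - a)^2)" using c2 K1 by simp
  also have "\<dots> = \<epsilon> * n" using ab by simp
  finally have yle: "y \<le> \<epsilon> * n" .
  have D2: "real D \<le> 2 * \<epsilon> * n" using Dy yle hB by linarith
  have DD: "real D * ((b - a) / q)^2 \<ge> (1 + 1/(2 * sqrt l1) + 1/(2 * sqrt l2)) * sqrt n"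
  proof -
    have "K * sqrt n = y * ((b - a) / q)^2" using q1 ab by (simp add: y_def field_simps)
    also have "\<dots> \<le> real D * ((b - a) / q)^2" using Dy by (intro mult_right_mono) auto
    finally show ?thesis using K by simp
  qed
  obtain N u E where code: "is_DI_code a b n N l1 l2 u E"
    and cnt: "(q+1)^n \<le> (n+1) * (2^n * (q+1)^D + 1) * N"
    using code_exists[OF ab l _ q1 DD] n2 by auto
  define Q where "Q = real q + 1"
  have Q2: "Q \<ge> 2" using q1 by (simp add: Q_def)
  have Npos: "N \<ge> 1"
  proof (rule ccontr)
    assume "\<not> N \<ge> 1"
    then have "N = 0" by simp
    then show False using cnt by simp
  qed
  have cntR: "Q^n \<le> real (n+1) * (2^n * Q^D + 1) * real N"
    using cnt unfolding Q_def by (metis (mono_tags, lifting) of_nat_1 of_nat_add of_nat_le_iff of_nat_mult of_nat_numeral of_nat_power)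
  have p1: "(1::real) \<le> 2^n" by (rule one_le_power) simp
  have p2: "(1::real) \<le> Q^D" by (rule one_le_power) (use Q2 in simp)
  have "2^n * Q^D \<ge> (1::real)" using p1 p2 by (metis mult_mono' le_numeral_extra(4) mult_1 zero_le_one)
  then have "real (n+1) * (2^n * Q^D + 1) * real N \<le> real (n+1) * (2 * 2^n * Q^D) * real N"
    by (intro mult_right_mono mult_left_mono) (auto simp: mult.commute)
  with cntR have R: "Q^n \<le> real (n+1) * (2 * 2^n * Q^D) * real N" by linarith
  have Qp: "Q > 0" using Q2 by simp
  have Np: "real N > 0" using Npos by simp
  have "real n * ln Q = ln (Q^n)" using Qp by (simp add: ln_realpow)
  also have "\<dots> \<le> ln (real (n+1) * (2 * 2^n * Q^D) * real N)"
    using R Qp Np by (subst ln_le_cancel_iff) auto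
  also have "\<dots> = ln (real (n+1)) + (ln 2 + real n * ln 2 + real D * ln Q) + ln (real N)"
    using Qp Np by (simp add: ln_mult_pos ln_realpow)
  finally have L1: "ln (real N) \<ge> (real n - real D) * ln Q - (real n + 1) * ln 2 - ln (real n + 1)"
    by (simp add: algebra_simps)
  have ln2: "ln (2::real) \<le> 1" using ln_le_minus_one[of 2] by simp
  have lnn1: "ln (real n + 1) \<le> real n" using ln_le_minus_one[of "real n + 1"] by simp
  have lnQ0: "ln Q \<ge> 0" using Q2 by simp
  have lnQ: "ln Q \<ge> ln c + ln (real n) / 4"
  proof -
    have "ln (c * s) \<le> ln Q" using qge c0 s0 by (simp add: Q_def)
    moreover have "ln (c * s) = ln c + ln (real n) / 4"
      using c0 s0 n2 by (simp add: ln_mult_pos s_def ln_sqrt)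
    ultimately show ?thesis by simp
  qed
  have nD: "real n - real D \<ge> (1 - 2*\<epsilon>) * real n" using D2 by (simp add: algebra_simps)
  have e12: "1 - 2*\<epsilon> \<ge> 1/2" using eps by simp
  have "(real n - real D) * ln Q \<ge> ((1 - 2*\<epsilon>) * real n) * ln Q"
    using nD lnQ0 by (intro mult_right_mono) auto
  moreover have "((1 - 2*\<epsilon>) * real n) * ln Q \<ge> ((1 - 2*\<epsilon>) * real n) * (ln c + ln (real n) / 4)"
    using lnQ e12 by (intro mult_left_mono) auto
  moreover have "(real n + 1) * ln 2 \<le> real n + 1" using ln2 by (simp add: mult_left_le)
  ultimately have L2: "ln (real N) \<ge> ((1 - 2*\<epsilon>) * real n) * (ln c + ln (real n) / 4) - 3 * real n"
    using L1 lnn1 n2 by linarith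
  have "((1 - 2*\<epsilon>) * real n) * (ln c + \<epsilon> * ln (real n)) \<ge> ((1/2) * real n) * 6"
    using e12 hC by (intro mult_mono) auto
  then have L3: "ln (real N) \<ge> (1 - 2*\<epsilon>) * (1/4 - \<epsilon>) * (real n * ln (real n))"
    using L2 by (simp add: algebra_simps)
  have nl: "real n * ln (real n) > 0" using n2 by simp
  have "(1 - 2*\<epsilon>) * (1/4 - \<epsilon>) \<le> ln (real N) / (real n * ln (real n))"
    using L3 nl by (simp add: pos_le_divide_eq)
  also have "ln (real N) / (real n * ln (real n)) = log 2 (real N) / (real n * log 2 (real n))"
    by (simp add: log_def)
  finally have "ereal ((1 - 2*\<epsilon>) * (1/4 - \<epsilon>)) \<le> ereal (log 2 (real N) / (real n * log 2 (real n)))"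
    by simp
  also have "\<dots> \<le> DI_rate a b l1 l2 n"
    using rate_lower[OF n2 N_DI_lower[OF code]] Npos by simp
  finally show ?thesis .
qed

lemma liminf_lower:
  assumes ab: "0 \<le> a" "a < b" "b \<le> 1" and l: "l1 > 0" "l2 > 0"
  shows "ereal (1/4) \<le> liminf (DI_rate a b l1 l2)"
proof (rule ereal_le_epsilon2)
  fix e :: real assume e: "e > 0"
  define \<epsilon> where "\<epsilon> = min (1/8) (e/2)"
  have eps: "0 < \<epsilon>" "\<epsilon> \<le> 1/4" using e by (auto simp: \<epsilon>_def)
  define K where "K = 1 + 1/(2 * sqrt l1) + 1/(2 * sqrt l2)"
  have K1: "K \<ge> 1" using l by (simp add: K_def)
  define c where "c = (b - a) * sqrt (\<epsilon> / K)"
  have c0: "c > 0" using ab eps K1 by (simp add: c_def)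
  define Z where "Z = max (max 1 (- 4 * ln c)) (max (- ln \<epsilon>) ((6 - ln c) / \<epsilon>))"
  have ev: "eventually (\<lambda>n. ereal ((1 - 2*\<epsilon>) * (1/4 - \<epsilon>)) \<le> DI_rate a b l1 l2 n) sequentially"
    using ev_ln[of Z]
  proof (rule eventually_mono)
    fix n assume h: "Z \<le> ln (real n)"
    have n2: "n \<ge> 2"
    proof (rule ccontr)
      assume "\<not> n \<ge> 2"
      then have "real n \<le> 1" by simp
      then have "ln (real n) \<le> 0" by (cases "n = 0") auto
      then show False using h by (simp add: Z_def)
    qed
    have np: "real n > 0" using n2 by simp
    have hA: "c * sqrt (sqrt n) \<ge> 1"
    proof -
      have "ln (c * sqrt (sqrt n)) = ln c + ln (real n) / 4"
        using c0 np by (simp add: ln_mult_pos ln_sqrt)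
      also have "\<dots> \<ge> 0" using h by (simp add: Z_def)
      finally show ?thesis using c0 np by (simp add: ln_ge_zero_iff)
    qed
    have hB: "\<epsilon> * n \<ge> 1"
    proof -
      have "ln (\<epsilon> * n) = ln \<epsilon> + ln (real n)" using eps np by (simp add: ln_mult_pos)
      also have "\<dots> \<ge> 0" using h by (simp add: Z_def)
      finally show ?thesis using eps np by (simp add: ln_ge_zero_iff)
    qed
    have hC: "ln c + \<epsilon> * ln n \<ge> 6"
    proof -
      have "(6 - ln c) / \<epsilon> \<le> ln (real n)" using h by (simp add: Z_def)
      then have "6 - ln c \<le> ln (real n) * \<epsilon>" using eps by (simp add: pos_divide_le_eq)
      then show ?thesis by (simp add: algebra_simps)
    qed
    show "ereal ((1 - 2*\<epsilon>) * (1/4 - \<epsilon>)) \<le> DI_rate a b l1 l2 n"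
      by (rule per_n[OF ab l eps K_def c_def hA hB hC n2])
  qed
  have L: "ereal ((1 - 2*\<epsilon>) * (1/4 - \<epsilon>)) \<le> liminf (DI_rate a b l1 l2)"
    by (rule Liminf_bounded[OF ev])
  have "(1 - 2*\<epsilon>) * (1/4 - \<epsilon>) = 1/4 - 3/2 * \<epsilon> + 2 * \<epsilon>^2" by (simp add: algebra_simps power2_eq_square)
  moreover have "\<epsilon> \<le> e/2" by (simp add: \<epsilon>_def)
  ultimately have "(1 - 2*\<epsilon>) * (1/4 - \<epsilon>) \<ge> 1/4 - e" using zero_le_power2[of \<epsilon>] e eps by linarith
  then have "ereal (1/4 - e) \<le> ereal ((1 - 2*\<epsilon>) * (1/4 - \<epsilon>))" by (simp only: ereal_less_eq)
  then have L2: "ereal (1/4 - e) \<le> liminf (DI_rate a b l1 l2)" using L by (rule order_trans)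
  show "ereal (1/4) \<le> liminf (DI_rate a b l1 l2) + ereal e"
  proof (cases "liminf (DI_rate a b l1 l2)")
    case (real r) then show ?thesis using L2 by simp
  next
    case PInf then show ?thesis by simp
  next
    case MInf then show ?thesis using L2 by simp
  qed
qed

theorem corollary1:
  fixes a b l1 l2 :: real
  assumes "0 \<le> a" and "a < b" and "b \<le> 1"
    and "l1 > 0" and "l2 > 0" and "l1 + l2 < 1"
  shows "ereal (1/4) \<le> C_DI_dot a b
       \<and> C_DI_dot a b \<le> limsup (DI_rate a b l1 l2)
       \<and> limsup (DI_rate a b l1 l2) \<le> ereal (1/2)"
proof (intro conjI)
  show "ereal (1/4) \<le> C_DI_dot a b"
    unfolding C_DI_dot_def
  proof (intro INF_greatest)
    fix x y :: real assume "x \<in> {0<..}" "y \<in> {0<..}"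
    then show "ereal (1/4) \<le> liminf (DI_rate a b x y)"
      using liminf_lower[OF assms(1-3)] by simp
  qed
  have "C_DI_dot a b \<le> (INF l2'\<in>{0<..}. liminf (DI_rate a b l1 l2'))"
    unfolding C_DI_dot_def by (rule INF_lower) (simp add: assms)
  also have "\<dots> \<le> liminf (DI_rate a b l1 l2)" by (rule INF_lower) (simp add: assms)
  also have "\<dots> \<le> limsup (DI_rate a b l1 l2)" by (rule Liminf_le_Limsup) simp
  finally show "C_DI_dot a b \<le> limsup (DI_rate a b l1 l2)" .
  show "limsup (DI_rate a b l1 l2) \<le> ereal (1/2)"
    using limsup_upper assms by simp
qed

end
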